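(* Let $n,m,l$ be positive integers, $f:\mathbb{R}^n\times\mathbb{R}^m\to\mathbb{R}^n$ smooth with $f(0,0)=0$, $g_1,\dots,g_l:\mathbb{R}^n\times\mathbb{R}^m\to\mathbb{R}$ smooth with $g_i(0,0)=0$, and let $N_1,\dots,N_l\in\{1,\dots,n\}$ be pairwise distinct. Consider the system $$\dot x=f(x,u)+g_1(x,u)\theta_1e_{N_1}+\dots+g_l(x,u)\theta_le_{N_l},\qquad x\in\mathbb{R}^n,\ u\in\mathbb{R}^m,$$ with $e_1,\dots,e_n$ the standard basis of $\mathbb{R}^n$ and unknown constant $\theta=(\theta_1,\dots,\theta_l)'\in\mathbb{R}^l$, and let $k:\mathbb{R}^l\times\mathbb{R}^n\to\mathbb{R}^m$ be smooth with $k(\vartheta,0)=0$ for all $\vartheta$. Suppose that for every $\theta,\hat\theta_1,\dots,\hat\theta_l\in\mathbb{R}^l$ the sets $I_1,\dots,I_l$ produced by the algorithm in the context satisfy $I_1\cup\dots\cup I_l=\{1,\dots,l\}$. Then the following holds (with $N=l$ and $g(x,u)$ the $n\times l$ matrix whose $p$-th column is $g_p(x,u)e_{N_p}$): if there exist times $0=\tau_0<\tau_1<\dots<\tau_l$, vectors $\theta,d_0,\dots,d_l\in\mathbb{R}^l$ with $d_i\ne0$ for $i=0,\dots,l$, and a right differentiable $x\in C^0([0,\tau_l];\mathbb{R}^n)\cap C^1([0,\tau_l]\setminus\{\tau_0,\dots,\tau_l\};\mathbb{R}^n)$ satisfying $\dot x(t)=f(x(t),k(\theta+d_i,x(t)))+g(x(t),k(\theta+d_i,x(t)))\theta$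 for $t\in[\tau_i,\tau_{i+1})$, $i=0,\dots,l-1$, and $g(x(t),k(\theta+d_j,x(t)))d_{i+1}=0$ for all $t\in[\tau_j,\tau_{j+1}]$, $i=0,\dots,l-1$, $j=0,\dots,i$, then $x(t)=0$ for all $t\in[0,\tau_l]$.
   Context: Algorithm: given $\theta,\hat\theta_1,\dots,\hat\theta_l\in\mathbb{R}^l$, for $z\in\mathbb{R}^l$ define the vector field $F_z(x)=f(x,k(z,x))+\sum_{i=1}^lg_i(x,k(z,x))\theta_ie_{N_i}$. For a given $z$, say index $i\in\{1,\dots,l\}$ satisfies the implication ( * ) if: whenever $x\in\mathbb{R}^n$ satisfies $h_i(x)=0$ and $L_{F_z}^{(j)}h_i(x)=0$ for all $j=1,2,\dots$, where $h_i(x):=g_i(x,k(z,x))$, then $x=0$. Here $L_Fh=\nabla h\,F$ is the Lie derivative and $L_F^{(j)}h=L_FL_F^{(j-1)}h$, $L_F^{(1)}h=L_Fh$. Step 1: set $z=\hat\theta_1$ and let $I_1$ be the set of indices $i$ satisfying ( * ). Step $s>1$: set $z=\hat\theta_s$, then replace the component $z_i$ by $\theta_i$ for every $i\in I_1\cup\dots\cup I_{s-1}$; let $I_s$ be the set of indices $i$ satisfying ( * ) for this $z$. *)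

theory Defs
  imports "HOL-Analysis.Analysis"
begin

fun iter_dderiv :: "('a::real_normed_vector \<Rightarrow> 'b::real_normed_vector) \<Rightarrow> 'a list \<Rightarrow> 'a \<Rightarrow> 'b" where
  "iter_dderiv f [] = f"
| "iter_dderiv f (v # vs) = (\<lambda>x. frechet_derivative (iter_dderiv f vs) (at x) v)"

definition smooth :: "('a::real_normed_vector \<Rightarrow> 'b::real_normed_vector) \<Rightarrow> bool" where
  "smooth f \<longleftrightarrow> (\<forall>vs x. iter_dderiv f vs differentiable (at x))"

fun lie_deriv :: "('a::real_normed_vector \<Rightarrow> 'a) \<Rightarrow> ('a \<Rightarrow> real) \<Rightarrow> nat \<Rightarrow> 'a \<Rightarrow> real" where
  "lie_deriv F h 0 = h"
| "lie_deriv F h (Suc j) = (\<lambda>x. frechet_derivative (lie_deriv F h j) (at x) (F x))"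

definition gtheta :: "('l::finite \<Rightarrow> real^'n \<Rightarrow> real^'m \<Rightarrow> real) \<Rightarrow> ('l \<Rightarrow> 'n::finite)
     \<Rightarrow> real^'n \<Rightarrow> real^'m \<Rightarrow> real^'l \<Rightarrow> real^'n" where
  "gtheta g N x u th = (\<Sum>p\<in>UNIV. (g p x u * th $ p) *\<^sub>R axis (N p) 1)"

definition Fz :: "(real^'n \<Rightarrow> real^'m \<Rightarrow> real^'n) \<Rightarrow> ('l::finite \<Rightarrow> real^'n \<Rightarrow> real^'m \<Rightarrow> real)
     \<Rightarrow> ('l \<Rightarrow> 'n::finite) \<Rightarrow> (real^'l \<Rightarrow> real^'n \<Rightarrow> real^'m) \<Rightarrow> real^'l \<Rightarrow> real^'l
     \<Rightarrow> real^'n \<Rightarrow> real^'n" where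
  "Fz f g N k th z x = f x (k z x) + gtheta g N x (k z x) th"

definition star_prop :: "(real^'n \<Rightarrow> real^'m \<Rightarrow> real^'n) \<Rightarrow> ('l::finite \<Rightarrow> real^'n \<Rightarrow> real^'m \<Rightarrow> real)
     \<Rightarrow> ('l \<Rightarrow> 'n::finite) \<Rightarrow> (real^'l \<Rightarrow> real^'n \<Rightarrow> real^'m) \<Rightarrow> real^'l \<Rightarrow> real^'l \<Rightarrow> 'l \<Rightarrow> bool" where
  "star_prop f g N k th z i \<longleftrightarrow>
     (\<forall>x. (g i x (k z x) = 0 \<and> (\<forall>j\<ge>1. lie_deriv (Fz f g N k th z) (\<lambda>y. g i y (k z y)) j x = 0))
          \<longrightarrow> x = 0)"

text \<open>alg_union ... s = I_1 \<union> ... \<union> I_s (steps s = 1..l use hat s).\<close>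
fun alg_union :: "(real^'n \<Rightarrow> real^'m \<Rightarrow> real^'n) \<Rightarrow> ('l::finite \<Rightarrow> real^'n \<Rightarrow> real^'m \<Rightarrow> real)
     \<Rightarrow> ('l \<Rightarrow> 'n::finite) \<Rightarrow> (real^'l \<Rightarrow> real^'n \<Rightarrow> real^'m) \<Rightarrow> real^'l \<Rightarrow> (nat \<Rightarrow> real^'l)
     \<Rightarrow> nat \<Rightarrow> 'l set" where
  "alg_union f g N k th hat 0 = {}"
| "alg_union f g N k th hat (Suc s) =
     alg_union f g N k th hat s \<union>
     {i. star_prop f g N k th
           (\<chi> r. if r \<in> alg_union f g N k th hat s then th $ r else hat (Suc s) $ r) i}"

end

theory Submission
  imports Defs
begin


fun sm :: "nat \<Rightarrow> ('a::real_normed_vector \<Rightarrow> 'b::real_normed_vector) \<Rightarrow> bool" where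
  "sm 0 f = True"
| "sm (Suc n) f = ((\<forall>x. f differentiable (at x)) \<and> (\<forall>v. sm n (\<lambda>x. frechet_derivative f (at x) v)))"

lemma iter_snoc: "iter_dderiv f (vs @ [v]) = iter_dderiv (\<lambda>x. frechet_derivative f (at x) v) vs"
  by (induction vs) auto

lemma smooth_sm: "smooth f \<Longrightarrow> sm n f"
proof (induction n arbitrary: f)
  case 0 then show ?case by simp
next
  case (Suc n)
  have d: "\<forall>x. f differentiable (at x)" using Suc.prems unfolding smooth_def
    by (metis iter_dderiv.simps(1))
  have "smooth (\<lambda>x. frechet_derivative f (at x) v)" for v
    using Suc.prems unfolding smooth_def by (metis iter_snoc)
  with Suc.IH d show ?case by simp
qed

lemma sm_mono: "sm (Suc n) f \<Longrightarrow> sm n f"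
proof (induction n arbitrary: f)
  case 0 then show ?case by simp
next
  case (Suc n) then show ?case by (metis sm.simps(2))
qed

lemma fd_eq: "(f has_derivative f') (at x) \<Longrightarrow> frechet_derivative f (at x) v = f' v"
  by (metis frechet_derivative_at)

lemma sm_const: "sm n (\<lambda>x. c)"
  by (induction n arbitrary: c) auto

lemma sm_linear: "bounded_linear L \<Longrightarrow> sm n L"
proof (cases n)
  case (Suc m)
  assume L: "bounded_linear L"
  have "frechet_derivative L (at x) v = L v" for x v
    using fd_eq[OF bounded_linear.has_derivative[OF L has_derivative_ident]] by simp
  moreover have "\<forall>v. sm m (\<lambda>x. L v)" using sm_const by blast
  ultimately show ?thesis using Suc L
    by (simp add: bounded_linear_imp_differentiable)
qed simp

lemma sm_lincomp: "bounded_linear L \<Longrightarrow> sm n f \<Longrightarrow> sm n (\<lambda>x. L (f x))"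
proof (induction n arbitrary: f)
  case 0 then show ?case by simp
next
  case (Suc n)
  have d: "f differentiable (at x)" for x using Suc.prems by simp
  have hd: "((\<lambda>x. L (f x)) has_derivative (\<lambda>v. L (frechet_derivative f (at x) v))) (at x)" for x
    using bounded_linear.has_derivative[OF Suc.prems(1) d[unfolded frechet_derivative_works]] .
  have "sm n (\<lambda>x. L (frechet_derivative f (at x) v))" for v
    using Suc by simp
  then show ?case using hd fd_eq[OF hd] by (auto simp: differentiable_def)
qed

lemma sm_add: "sm n f \<Longrightarrow> sm n g \<Longrightarrow> sm n (\<lambda>x. f x + g x)"
proof (induction n arbitrary: f g)
  case 0 then show ?case by simp
next
  case (Suc n)
  have hd: "((\<lambda>x. f x + g x) has_derivative (\<lambda>v. frechet_derivative f (at x) v + frechet_derivative g (at x) v)) (at x)" for x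
    using Suc.prems by (intro has_derivative_add) (auto simp: frechet_derivative_works)
  show ?case using hd fd_eq[OF hd] Suc by (auto simp: differentiable_def)
qed

lemma sm_scaleR: "sm n (f::_\<Rightarrow>real) \<Longrightarrow> sm n g \<Longrightarrow> sm n (\<lambda>x. f x *\<^sub>R g x)"
proof (induction n arbitrary: f g)
  case 0 then show ?case by simp
next
  case (Suc n)
  have hd: "((\<lambda>x. f x *\<^sub>R g x) has_derivative (\<lambda>v. f x *\<^sub>R frechet_derivative g (at x) v + frechet_derivative f (at x) v *\<^sub>R g x)) (at x)" for x
    using Suc.prems by (intro has_derivative_scaleR) (auto simp: frechet_derivative_works)
  have "sm n (\<lambda>x. f x *\<^sub>R frechet_derivative g (at x) v + frechet_derivative f (at x) v *\<^sub>R g x)" for v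
  proof (intro sm_add)
    have a: "sm n f" "sm n g" using Suc.prems sm_mono by blast+
    show "sm n (\<lambda>x. f x *\<^sub>R frechet_derivative g (at x) v)"
      using Suc.IH[OF a(1)] Suc.prems by simp
    show "sm n (\<lambda>x. frechet_derivative f (at x) v *\<^sub>R g x)"
      using Suc.IH[OF _ a(2)] Suc.prems by simp
  qed
  then show ?case using hd fd_eq[OF hd] by (auto simp: differentiable_def)
qed

lemma sm_sum: "finite S \<Longrightarrow> (\<And>i. i \<in> S \<Longrightarrow> sm n (f i)) \<Longrightarrow> sm n (\<lambda>x. \<Sum>i\<in>S. f i x)"
  by (induction S rule: finite_induct) (auto intro: sm_add sm_const)

lemma lin_expand: "linear L \<Longrightarrow> L (v::'a::euclidean_space) = (\<Sum>b\<in>Basis. (v \<bullet> b) *\<^sub>R L b)"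
proof -
  assume "linear L"
  have "L v = L (\<Sum>b\<in>Basis. (v \<bullet> b) *\<^sub>R b)" by (simp add: euclidean_representation)
  also have "\<dots> = (\<Sum>b\<in>Basis. (v \<bullet> b) *\<^sub>R L b)" using \<open>linear L\<close>
    by (simp add: linear_sum linear_scale)
  finally show ?thesis .
qed

lemma fd_linear: "f differentiable (at x) \<Longrightarrow> linear (frechet_derivative f (at x))"
  by (simp add: frechet_derivative_works has_derivative_linear)

lemma sm_comp: "sm n (f::'b::euclidean_space \<Rightarrow> 'c::real_normed_vector) \<Longrightarrow> sm n (g::'a::real_normed_vector\<Rightarrow>'b) \<Longrightarrow> sm n (\<lambda>x. f (g x))"
proof (induction n arbitrary: f g)
  case 0 then show ?case by simp
next
  case (Suc n)
  have dg: "g differentiable (at x)" for x using Suc.prems by simp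
  have df: "f differentiable (at y)" for y using Suc.prems by simp
  have hd: "((\<lambda>x. f (g x)) has_derivative (\<lambda>v. frechet_derivative f (at (g x)) (frechet_derivative g (at x) v))) (at x)" for x
    using diff_chain_at[OF dg[unfolded frechet_derivative_works] df[unfolded frechet_derivative_works]]
    by (simp add: o_def)
  have eq: "frechet_derivative f (at (g x)) (frechet_derivative g (at x) v) =
     (\<Sum>b\<in>Basis. (frechet_derivative g (at x) v \<bullet> b) *\<^sub>R frechet_derivative f (at (g x)) b)" for x v
    by (rule lin_expand[OF fd_linear[OF df]])
  have "sm n (\<lambda>x. \<Sum>b\<in>Basis. (frechet_derivative g (at x) v \<bullet> b) *\<^sub>R frechet_derivative f (at (g x)) b)" for v
  proof (rule sm_sum, simp)
    fix b :: 'b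
    have s1: "sm n (\<lambda>x. frechet_derivative g (at x) v \<bullet> b)"
      using Suc.prems by (intro sm_lincomp[where L="\<lambda>y. y \<bullet> b"]) (auto intro: bounded_linear_inner_left)
    have s2: "sm n (\<lambda>x. frechet_derivative f (at (g x)) b)"
      using Suc.prems sm_mono by (intro Suc.IH[where f="\<lambda>y. frechet_derivative f (at y) b"]) auto
    show "sm n (\<lambda>x. (frechet_derivative g (at x) v \<bullet> b) *\<^sub>R frechet_derivative f (at (g x)) b)"
      by (rule sm_scaleR[OF s1 s2])
  qed
  then show ?case using hd fd_eq[OF hd] eq by (auto simp: differentiable_def)
qed



definition smo where "smo f \<longleftrightarrow> (\<forall>n. sm n f)"

lemma smooth_smo: "smooth f \<Longrightarrow> smo f" by (simp add: smo_def smooth_sm)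

lemma smo_diff: "smo f \<Longrightarrow> f differentiable (at x)"
proof -
  assume "smo f"
  then have "sm (Suc 0) f" unfolding smo_def by blast
  then show ?thesis by simp
qed

lemma smo_pair: "smo f \<Longrightarrow> smo g \<Longrightarrow> smo (\<lambda>x. (f x, g x))"
proof -
  assume a: "smo f" "smo g"
  have l1: "bounded_linear (\<lambda>p. (p, 0))" by (intro bounded_linear_Pair bounded_linear_ident bounded_linear_zero)
  have l2: "bounded_linear (\<lambda>p. (0, p))" by (intro bounded_linear_Pair bounded_linear_ident bounded_linear_zero)
  have "sm n (\<lambda>x. (f x, 0) + (0, g x))" for n
    using sm_add[OF sm_lincomp[OF l1, of n f] sm_lincomp[OF l2, of n g]] a unfolding smo_def by blast
  then show ?thesis by (simp add: smo_def)
qed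

lemma smo_const: "smo (\<lambda>x. c)" by (simp add: smo_def sm_const)
lemma smo_id: "smo (\<lambda>x. x)" by (simp add: smo_def sm_linear bounded_linear_ident)
lemma smo_comp: "smo (f::'b::euclidean_space \<Rightarrow> 'c::real_normed_vector) \<Longrightarrow> smo g \<Longrightarrow> smo (\<lambda>x. f (g x))"
  by (simp add: smo_def sm_comp)
lemma smo_add: "smo f \<Longrightarrow> smo g \<Longrightarrow> smo (\<lambda>x. f x + g x)"
  by (simp add: smo_def sm_add)
lemma smo_scaleR: "smo (f::_\<Rightarrow>real) \<Longrightarrow> smo g \<Longrightarrow> smo (\<lambda>x. f x *\<^sub>R g x)"
  by (simp add: smo_def sm_scaleR)
lemma smo_sum: "finite S \<Longrightarrow> (\<And>i. i \<in> S \<Longrightarrow> smo (f i)) \<Longrightarrow> smo (\<lambda>x. \<Sum>i\<in>S. f i x)"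
  by (simp add: smo_def sm_sum)
lemma smo_lincomp: "bounded_linear L \<Longrightarrow> smo f \<Longrightarrow> smo (\<lambda>x. L (f x))"
  by (simp add: smo_def sm_lincomp)

lemma smo_lie1:
  fixes h :: "'a::euclidean_space \<Rightarrow> real" and F :: "'a \<Rightarrow> 'a"
  assumes "smo h" "smo F"
  shows "smo (\<lambda>x. frechet_derivative h (at x) (F x))"
proof -
  have eq: "frechet_derivative h (at x) (F x) = (\<Sum>b\<in>Basis. (F x \<bullet> b) *\<^sub>R frechet_derivative h (at x) b)" for x
    by (rule lin_expand[OF fd_linear[OF smo_diff[OF assms(1)]]])
  have "sm n (\<lambda>x. \<Sum>b\<in>Basis. (F x \<bullet> b) *\<^sub>R frechet_derivative h (at x) b)" for n
  proof (rule sm_sum, simp)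
    fix b :: 'a
    show "sm n (\<lambda>x. (F x \<bullet> b) *\<^sub>R frechet_derivative h (at x) b)"
    proof (rule sm_scaleR)
      show "sm n (\<lambda>x. F x \<bullet> b)" using assms(2) unfolding smo_def
        by (intro sm_lincomp[where L="\<lambda>y. y \<bullet> b"] bounded_linear_inner_left) blast
      have "sm (Suc n) h" using assms(1) unfolding smo_def by blast
      then show "sm n (\<lambda>x. frechet_derivative h (at x) b)" by simp
    qed
  qed
  then show ?thesis using eq by (simp add: smo_def)
qed

lemma smo_lie: 
  fixes h :: "'a::euclidean_space \<Rightarrow> real" and F :: "'a \<Rightarrow> 'a"
  assumes "smo h" "smo F"
  shows "smo (lie_deriv F h j)"
proof (induction j)
  case 0 then show ?case using assms(1) by simp
next
  case (Suc j) then show ?case using smo_lie1[OF Suc assms(2)] by simp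
qed


context
  fixes f :: "real^'n \<Rightarrow> real^'m \<Rightarrow> real^'n"
    and g :: "'l::finite \<Rightarrow> real^'n \<Rightarrow> real^'m \<Rightarrow> real"
    and N :: "'l \<Rightarrow> 'n::finite"
    and k :: "real^'l \<Rightarrow> real^'n \<Rightarrow> real^'m::finite"
  assumes f_smooth: "smooth (\<lambda>(y, u). f y u)"
    and g_smooth: "\<And>p. smooth (\<lambda>(y, u). g p y u)"
    and k_smooth: "smooth (\<lambda>(v, y). k v y)"
begin

lemma smo_k: "smo (\<lambda>y. k z y)"
proof -
  have "smo (\<lambda>y. (\<lambda>(v, y). k v y) (z, y))"
    by (rule smo_comp[OF smooth_smo[OF k_smooth] smo_pair[OF smo_const smo_id]])
  then show ?thesis by simp
qed

lemma smo_P: "smo (\<lambda>y. (y, k z y))"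
  by (rule smo_pair[OF smo_id smo_k])

lemma smo_h: "smo (\<lambda>y. g p y (k z y))"
proof -
  have "smo (\<lambda>y. (\<lambda>(y, u). g p y u) (y, k z y))"
    by (rule smo_comp[OF smooth_smo[OF g_smooth] smo_P])
  then show ?thesis by simp
qed

lemma smo_F: "smo (Fz f g N k th z)"
proof -
  have a: "smo (\<lambda>y. (\<lambda>(y, u). f y u) (y, k z y))"
    by (rule smo_comp[OF smooth_smo[OF f_smooth] smo_P])
  have b: "smo (\<lambda>y. \<Sum>p\<in>UNIV. (g p y (k z y) * th $ p) *\<^sub>R axis (N p) (1::real))"
  proof (rule smo_sum, simp)
    fix p
    have "smo (\<lambda>y. g p y (k z y) * th $ p)"
      by (rule smo_lincomp[OF bounded_linear_mult_left smo_h])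
    then show "smo (\<lambda>y. (g p y (k z y) * th $ p) *\<^sub>R axis (N p) (1::real))"
      by (rule smo_scaleR[OF _ smo_const])
  qed
  show ?thesis using smo_add[OF a b] unfolding Fz_def gtheta_def by simp
qed

lemma smo_lieh: "smo (lie_deriv (Fz f g N k th z) (\<lambda>y. g p y (k z y)) j)"
  by (rule smo_lie[OF smo_h smo_F])

end


lemma deriv_w:
  fixes x :: "real \<Rightarrow> 'a::real_inner"
  assumes "(x has_vector_derivative v) (at s)"
  shows "((\<lambda>s. (x s \<bullet> x s) * exp (c * s)) has_real_derivative
           ((2 * (x s \<bullet> v) + c * (x s \<bullet> x s)) * exp (c * s))) (at s)"
proof -
  have hx: "(x has_derivative (\<lambda>h. h *\<^sub>R v)) (at s)" using assms by (simp add: has_vector_derivative_def)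
  have hi: "((\<lambda>s. x s \<bullet> x s) has_real_derivative 2 * (x s \<bullet> v)) (at s)"
    unfolding has_field_derivative_def
    by (rule has_derivative_eq_rhs[OF has_derivative_inner[OF hx hx]])
      (auto simp: fun_eq_iff inner_commute algebra_simps)
  show ?thesis
    by (rule derivative_eq_intros hi | simp)+ (simp add: algebra_simps)
qed

lemma gron_right:
  fixes x :: "real \<Rightarrow> 'a::real_inner"
  assumes ab: "a \<le> b" and cont: "continuous_on {a..b} x"
    and der: "\<And>t. a < t \<Longrightarrow> t < b \<Longrightarrow> (x has_vector_derivative F (x t)) (at t)"
    and bd: "\<And>t. t \<in> {a..b} \<Longrightarrow> norm (F (x t)) \<le> L * norm (x t)"
    and xa: "x a = 0"
  shows "\<forall>t\<in>{a..b}. x t = 0"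
proof
  fix t assume t: "t \<in> {a..b}"
  let ?w = "\<lambda>s. (x s \<bullet> x s) * exp ((-2*L) * s)"
  have "?w a \<ge> ?w t"
  proof (rule DERIV_nonpos_imp_decreasing_open[of a t ?w])
    show "a \<le> t" using t by simp
    fix s assume s: "a < s" "s < t"
    have d: "(?w has_real_derivative (2 * (x s \<bullet> F (x s)) + (-2*L) * (x s \<bullet> x s)) * exp ((-2*L) * s)) (at s)"
    proof -
      have "(x has_vector_derivative F (x s)) (at s)" using der s t by auto
      from deriv_w[OF this, of "-2*L"] show ?thesis .
    qed
    have "x s \<bullet> F (x s) \<le> norm (x s) * norm (F (x s))" by (rule norm_cauchy_schwarz)
    also have "\<dots> \<le> norm (x s) * (L * norm (x s))" using bd[of s] s t by (intro mult_left_mono) auto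
    also have "\<dots> = L * (x s \<bullet> x s)" by (simp add: power2_norm_eq_inner[symmetric] power2_eq_square)
    finally have "(2 * (x s \<bullet> F (x s)) + (-2*L) * (x s \<bullet> x s)) * exp ((-2*L) * s) \<le> 0"
      by (simp add: mult_nonpos_nonneg)
    with d show "\<exists>y. (?w has_real_derivative y) (at s) \<and> y \<le> 0" by blast
  next
    show "continuous_on {a..t} ?w"
      using t by (intro continuous_intros continuous_on_subset[OF cont]) auto
  qed
  then have "x t \<bullet> x t \<le> 0" using xa by (simp add: mult_le_0_iff)
  then show "x t = 0" by (metis inner_eq_zero_iff inner_ge_zero order_antisym)
qed

lemma gron_left:
  fixes x :: "real \<Rightarrow> 'a::real_inner"
  assumes ab: "a \<le> b" and cont: "continuous_on {a..b} x"
    and der: "\<And>t. a < t \<Longrightarrow> t < b \<Longrightarrow> (x has_vector_derivative F (x t)) (at t)"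
    and bd: "\<And>t. t \<in> {a..b} \<Longrightarrow> norm (F (x t)) \<le> L * norm (x t)"
    and xb: "x b = 0"
  shows "\<forall>t\<in>{a..b}. x t = 0"
proof
  fix t assume t: "t \<in> {a..b}"
  let ?w = "\<lambda>s. (x s \<bullet> x s) * exp ((2*L) * s)"
  have "?w t \<le> ?w b"
  proof (rule DERIV_nonneg_imp_increasing_open[of t b ?w])
    show "t \<le> b" using t by simp
    fix s assume s: "t < s" "s < b"
    have d: "(?w has_real_derivative (2 * (x s \<bullet> F (x s)) + (2*L) * (x s \<bullet> x s)) * exp ((2*L) * s)) (at s)"
    proof -
      have "(x has_vector_derivative F (x s)) (at s)" using der s t by auto
      from deriv_w[OF this, of "2*L"] show ?thesis .
    qed
    have "- (x s \<bullet> F (x s)) \<le> norm (x s) * norm (F (x s))"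
      using norm_cauchy_schwarz[of "x s" "- F (x s)"] by simp
    also have "\<dots> \<le> norm (x s) * (L * norm (x s))" using bd[of s] s t by (intro mult_left_mono) auto
    also have "\<dots> = L * (x s \<bullet> x s)" by (simp add: power2_norm_eq_inner[symmetric] power2_eq_square)
    finally have "(2 * (x s \<bullet> F (x s)) + (2*L) * (x s \<bullet> x s)) * exp ((2*L) * s) \<ge> 0"
      by simp
    with d show "\<exists>y. (?w has_real_derivative y) (at s) \<and> y \<ge> 0" by blast
  next
    show "continuous_on {t..b} ?w"
      using t by (intro continuous_intros continuous_on_subset[OF cont]) auto
  qed
  then have "x t \<bullet> x t \<le> 0" using xb by (simp add: mult_le_0_iff)
  then show "x t = 0" by (metis inner_eq_zero_iff inner_ge_zero order_antisym)
qed



lemma lin_bound: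
  fixes F :: "'a::real_normed_vector \<Rightarrow> 'b::real_normed_vector"
  assumes "F differentiable (at 0)" "F 0 = 0"
  shows "\<exists>r>0. \<exists>L. \<forall>y. norm y < r \<longrightarrow> norm (F y) \<le> L * norm y"
proof -
  obtain D where hD: "(F has_derivative D) (at 0)" using assms(1) by (auto simp: differentiable_def)
  then have bl: "bounded_linear D"
    and e: "\<forall>e>0. \<exists>d>0. \<forall>y. norm (y - 0) < d \<longrightarrow> norm (F y - F 0 - D (y - 0)) \<le> e * norm (y - 0)"
    unfolding has_derivative_at_alt by auto
  obtain d where d: "d > 0" "\<forall>y. norm y < d \<longrightarrow> norm (F y - D y) \<le> 1 * norm y"
    using e[rule_format, of 1] assms(2) by auto
  obtain K where K: "\<And>y. norm (D y) \<le> norm y * K" using bounded_linear.bounded[OF bl] by blast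
  have "norm (F y) \<le> (K + 1) * norm y" if "norm y < d" for y
  proof -
    have "norm (F y) \<le> norm (F y - D y) + norm (D y)" using norm_triangle_ineq[of "F y - D y" "D y"] by simp
    also have "\<dots> \<le> norm y + norm y * K" using d(2) that K[of y] by auto
    finally show ?thesis by (simp add: algebra_simps)
  qed
  then show ?thesis using d(1) by blast
qed

lemma vanish_step:
  fixes x :: "real \<Rightarrow> 'a::real_normed_vector" and \<phi> :: "'a \<Rightarrow> real"
  assumes dphi: "\<phi> differentiable (at (x t))" and dx: "(x has_vector_derivative v) (at t)"
    and S: "open S" "t \<in> S" and z: "\<forall>s\<in>S. \<phi> (x s) = 0"
  shows "frechet_derivative \<phi> (at (x t)) v = 0"
proof -
  have h1: "((\<lambda>s. \<phi> (x s)) has_derivative (\<lambda>h. frechet_derivative \<phi> (at (x t)) (h *\<^sub>R v))) (at t)"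
    using diff_chain_at[OF dx[unfolded has_vector_derivative_def] dphi[unfolded frechet_derivative_works]]
    by (simp add: o_def)
  have h0: "((\<lambda>s. 0::real) has_derivative (\<lambda>h. 0)) (at t)" by simp
  have h2: "((\<lambda>s. \<phi> (x s)) has_derivative (\<lambda>h. 0)) (at t)"
    by (rule has_derivative_transform_within_open[OF h0 S]) (use z in auto)
  have "(\<lambda>h. frechet_derivative \<phi> (at (x t)) (h *\<^sub>R v)) = (\<lambda>h. 0)"
    by (rule has_derivative_unique[OF h1 h2])
  then show ?thesis by (metis scaleR_one)
qed

lemma gtheta_comp:
  assumes "inj N"
  shows "gtheta g N y u v $ N p = g p y u * v $ p"
proof -
  have "gtheta g N y u v $ N p = (\<Sum>q\<in>UNIV. (g q y u * v $ q) * (if q = p then 1 else 0))"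
    unfolding gtheta_def using assms by (auto simp: axis_def inj_eq intro!: sum.cong)
  also have "\<dots> = g p y u * v $ p" by (simp add: if_distrib cong: if_cong)
  finally show ?thesis .
qed

lemma tau_lt:
  assumes "\<And>i. i < l \<Longrightarrow> \<tau> i < (\<tau> (Suc i) :: real)" "i < j" "j \<le> l"
  shows "\<tau> i < \<tau> j"
  using assms(2,3)
proof (induction j)
  case 0 then show ?case by simp
next
  case (Suc j)
  show ?case
  proof (cases "i = j")
    case True then show ?thesis using assms(1) Suc by auto
  next
    case False then show ?thesis using assms(1) Suc by (meson less_Suc_eq less_trans Suc_le_lessD less_imp_le)
  qed
qed

lemma tau_find_r:
  assumes "m \<le> l" "\<tau> 0 \<le> t" "t < (\<tau> m :: real)"
  shows "\<exists>j<m. \<tau> j \<le> t \<and> t < \<tau> (Suc j)"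
  using assms
proof (induction m)
  case 0 then show ?case by simp
next
  case (Suc m)
  show ?case
  proof (cases "t < \<tau> m")
    case True then show ?thesis using Suc by (metis Suc_leD less_SucI)
  next
    case False then show ?thesis using Suc by (intro exI[of _ m]) auto
  qed
qed

lemma tau_find_l:
  assumes "m \<le> l" "\<tau> 0 < t" "t \<le> (\<tau> m :: real)"
  shows "\<exists>j<m. \<tau> j < t \<and> t \<le> \<tau> (Suc j)"
  using assms
proof (induction m)
  case 0 then show ?case by simp
next
  case (Suc m)
  show ?case
  proof (cases "t \<le> \<tau> m")
    case True then show ?thesis using Suc by (metis Suc_leD less_SucI)
  next
    case False then show ?thesis using Suc by (intro exI[of _ m]) auto
  qed
qed



theorem theorem4p1:
  fixes f :: "real^'n \<Rightarrow> real^'m \<Rightarrow> real^'n"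
    and g :: "'l::finite \<Rightarrow> real^'n \<Rightarrow> real^'m \<Rightarrow> real"
    and N :: "'l \<Rightarrow> 'n::finite"
    and k :: "real^'l \<Rightarrow> real^'n \<Rightarrow> real^'m::finite"
    and th :: "real^'l"
    and \<tau> :: "nat \<Rightarrow> real"
    and d :: "nat \<Rightarrow> real^'l"
    and x :: "real \<Rightarrow> real^'n"
  assumes f_smooth: "smooth (\<lambda>(y, u). f y u)"
    and f0: "f 0 0 = 0"
    and g_smooth: "\<And>p. smooth (\<lambda>(y, u). g p y u)"
    and g0: "\<And>p. g p 0 0 = 0"
    and N_inj: "inj N"
    and k_smooth: "smooth (\<lambda>(v, y). k v y)"
    and k0: "\<And>v. k v 0 = 0"
    and alg: "\<And>th' hat. alg_union f g N k th' hat CARD('l) = UNIV"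
    and tau0: "\<tau> 0 = 0"
    and tau_mono: "\<And>i. i < CARD('l) \<Longrightarrow> \<tau> i < \<tau> (Suc i)"
    and d_nz: "\<And>i. i \<le> CARD('l) \<Longrightarrow> d i \<noteq> 0"
    and x_cont: "continuous_on {0..\<tau> CARD('l)} x"
    and x_C1: "\<forall>t \<in> {0..\<tau> CARD('l)} - \<tau> ` {0..CARD('l)}. x differentiable (at t)"
    and x_C1': "continuous_on ({0..\<tau> CARD('l)} - \<tau> ` {0..CARD('l)}) (\<lambda>t. vector_derivative x (at t))"
    and x_ode: "\<And>i t. i < CARD('l) \<Longrightarrow> t \<in> {\<tau> i..<\<tau> (Suc i)} \<Longrightarrow>
        (x has_vector_derivative
           (f (x t) (k (th + d i) (x t)) + gtheta g N (x t) (k (th + d i) (x t)) th)) (at_right t)"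
    and constr: "\<And>i j t. i < CARD('l) \<Longrightarrow> j \<le> i \<Longrightarrow> t \<in> {\<tau> j..\<tau> (Suc j)} \<Longrightarrow>
        gtheta g N (x t) (k (th + d j) (x t)) (d (Suc i)) = 0"
  shows "\<forall>t \<in> {0..\<tau> CARD('l)}. x t = 0"
proof (rule ccontr)
  let ?l = "CARD('l)"
  define T where "T = \<tau> ?l"
  define Fj where "Fj j = Fz f g N k th (th + d j)" for j
  assume nz: "\<not> (\<forall>t\<in>{0..\<tau> ?l}. x t = 0)"
  have tlt: "\<And>i j. i < j \<Longrightarrow> j \<le> ?l \<Longrightarrow> \<tau> i < \<tau> j" using tau_lt[of ?l \<tau>] tau_mono by blast
  have tle: "\<And>i j. i \<le> j \<Longrightarrow> j \<le> ?l \<Longrightarrow> \<tau> i \<le> \<tau> j" using tlt by (metis order.order_iff_strict order.refl)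
  have der: "(x has_vector_derivative Fj j (x t)) (at t)"
    if j: "j < ?l" and t: "\<tau> j < t" "t < \<tau> (Suc j)" for j t
  proof -
    have tS: "t \<in> {0..\<tau> ?l} - \<tau> ` {0..?l}"
    proof -
      have "0 \<le> t" using tle[of 0 j] tau0 j t by simp
      moreover have "t \<le> \<tau> ?l" using tle[of "Suc j" ?l] j t by simp
      moreover have "t \<noteq> \<tau> i" if "i \<le> ?l" for i
      proof (cases "i \<le> j")
        case True then show ?thesis using tle[of i j] j t by auto
      next
        case False then have "Suc j \<le> i" by simp
        then show ?thesis using tle[of "Suc j" i] that t by auto
      qed
      ultimately show ?thesis by (auto simp: image_iff)
    qed
    then have "x differentiable (at t)" using x_C1 by blast
    then have h1: "(x has_vector_derivative vector_derivative x (at t)) (at t)"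
      by (simp add: vector_derivative_works)
    have h2: "(x has_vector_derivative Fj j (x t)) (at_right t)"
      using x_ode[OF j, of t] t unfolding Fj_def Fz_def by simp
    have "vector_derivative x (at t) = Fj j (x t)"
      by (rule vector_derivative_unique_within[OF _ has_vector_derivative_at_within[OF h1] h2]) simp
    with h1 show ?thesis by simp
  qed
  have smoF: "smo (Fj j)" for j unfolding Fj_def by (rule smo_F[OF f_smooth g_smooth k_smooth])
  have F0: "Fj j 0 = 0" for j unfolding Fj_def Fz_def gtheta_def by (simp add: k0 f0 g0)
  have lip: "\<exists>r>0. \<exists>L. \<forall>y. norm y < r \<longrightarrow> norm (Fj j y) \<le> L * norm y" for j
    by (rule lin_bound[OF smo_diff[OF smoF] F0])
  have T0: "0 \<le> T" unfolding T_def using tle[of 0 ?l] tau0 by simp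
  have Uq: "\<forall>t\<in>{0..T}. x t = 0" if t0: "t0 \<in> {0..T}" "x t0 = 0" for t0
  proof -
    let ?Z = "{t \<in> {0..T}. x t = 0}"
    have cl: "closedin (top_of_set {0..T}) ?Z"
      using continuous_closedin_preimage_constant x_cont unfolding T_def by blast
    have op: "openin (top_of_set {0..T}) ?Z"
      unfolding openin_euclidean_subtopology_iff
    proof (intro conjI ballI)
      fix s assume s: "s \<in> ?Z"
      have right: "\<exists>eR>0. \<forall>t'\<in>{0..T}. s \<le> t' \<longrightarrow> t' < s + eR \<longrightarrow> x t' = 0"
      proof (cases "s < T")
        case True
        obtain j where j: "j < ?l" "\<tau> j \<le> s" "s < \<tau> (Suc j)"
          using tau_find_r[of ?l ?l \<tau> s] True s tau0 unfolding T_def by auto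
        obtain r L where rL: "r > 0" "\<forall>y. norm y < r \<longrightarrow> norm (Fj j y) \<le> L * norm y" using lip by blast
        obtain \<delta> where \<delta>: "\<delta> > 0" "\<forall>t'\<in>{0..T}. dist t' s < \<delta> \<longrightarrow> dist (x t') (x s) < r"
          using x_cont s rL(1) unfolding continuous_on_iff T_def by blast
        define c where "c = min (\<tau> (Suc j)) (s + \<delta>/2)"
        have cT: "\<tau> (Suc j) \<le> T" unfolding T_def using tle j by simp
        have sc: "s < c" unfolding c_def using j \<delta> by auto
        have sub: "{s..c} \<subseteq> {0..T}" using s cT unfolding c_def by auto
        have "\<forall>t\<in>{s..c}. x t = 0"
        proof (rule gron_right[where F="Fj j" and L=L])
          show "s \<le> c" using sc by simp
          show "continuous_on {s..c} x" using x_cont sub unfolding T_def by (rule continuous_on_subset)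
          show "(x has_vector_derivative Fj j (x t)) (at t)" if "s < t" "t < c" for t
            using der[OF j(1)] that j unfolding c_def by auto
          show "norm (Fj j (x t)) \<le> L * norm (x t)" if "t \<in> {s..c}" for t
          proof -
            have "dist t s < \<delta>" using that \<delta> unfolding c_def dist_real_def by auto
            then have "dist (x t) (x s) < r" using \<delta>(2) sub that by blast
            then have "norm (x t) < r" using s by simp
            then show ?thesis using rL by blast
          qed
          show "x s = 0" using s by simp
        qed
        then show ?thesis using sc by (intro exI[of _ "c - s"]) auto
      next
        case False
        then show ?thesis using s by (intro exI[of _ 1]) auto
      qed
      have left: "\<exists>eL>0. \<forall>t'\<in>{0..T}. t' \<le> s \<longrightarrow> s - eL < t' \<longrightarrow> x t' = 0"
      proof (cases "0 < s")
        case True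
        obtain j where j: "j < ?l" "\<tau> j < s" "s \<le> \<tau> (Suc j)"
          using tau_find_l[of ?l ?l \<tau> s] True s tau0 unfolding T_def by auto
        obtain r L where rL: "r > 0" "\<forall>y. norm y < r \<longrightarrow> norm (Fj j y) \<le> L * norm y" using lip by blast
        obtain \<delta> where \<delta>: "\<delta> > 0" "\<forall>t'\<in>{0..T}. dist t' s < \<delta> \<longrightarrow> dist (x t') (x s) < r"
          using x_cont s rL(1) unfolding continuous_on_iff T_def by blast
        define c where "c = max (\<tau> j) (s - \<delta>/2)"
        have c0: "0 \<le> \<tau> j" using tle[of 0 j] j tau0 by simp
        have sc: "c < s" unfolding c_def using j \<delta> by auto
        have sub: "{c..s} \<subseteq> {0..T}" using s c0 unfolding c_def by auto
        have "\<forall>t\<in>{c..s}. x t = 0"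
        proof (rule gron_left[where F="Fj j" and L=L])
          show "c \<le> s" using sc by simp
          show "continuous_on {c..s} x" using x_cont sub unfolding T_def by (rule continuous_on_subset)
          show "(x has_vector_derivative Fj j (x t)) (at t)" if "c < t" "t < s" for t
            using der[OF j(1)] that j unfolding c_def by auto
          show "norm (Fj j (x t)) \<le> L * norm (x t)" if "t \<in> {c..s}" for t
          proof -
            have "dist t s < \<delta>" using that \<delta> unfolding c_def dist_real_def by auto
            then have "dist (x t) (x s) < r" using \<delta>(2) sub that by blast
            then have "norm (x t) < r" using s by simp
            then show ?thesis using rL by blast
          qed
          show "x s = 0" using s by simp
        qed
        then show ?thesis using sc by (intro exI[of _ "s - c"]) auto
      next
        case False
        then show ?thesis using s by (intro exI[of _ 1]) auto
      qed
      obtain eR where eR: "eR > 0" "\<forall>t'\<in>{0..T}. s \<le> t' \<longrightarrow> t' < s + eR \<longrightarrow> x t' = 0" using right by blast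
      obtain eL where eL: "eL > 0" "\<forall>t'\<in>{0..T}. t' \<le> s \<longrightarrow> s - eL < t' \<longrightarrow> x t' = 0" using left by blast
      show "\<exists>e>0. \<forall>x'\<in>{0..T}. dist x' s < e \<longrightarrow> x' \<in> ?Z"
      proof (intro exI[of _ "min eR eL"] conjI ballI impI)
        show "0 < min eR eL" using eR eL by simp
        fix t' assume t': "t' \<in> {0..T}" "dist t' s < min eR eL"
        show "t' \<in> ?Z"
        proof (cases "s \<le> t'")
          case True then show ?thesis using eR t' by (auto simp: dist_real_def)
        next
          case False then show ?thesis using eL t' by (auto simp: dist_real_def)
        qed
      qed
    qed auto
    have "?Z = {} \<or> ?Z = {0..T}" using connected_clopen[of "{0..T::real}"] cl op by auto
    then show ?thesis using t0 by auto
  qed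
  have NZ: "x t \<noteq> 0" if "t \<in> {0..T}" for t
    using Uq that nz unfolding T_def by blast
  have V: "lie_deriv (Fj j) (\<lambda>y. g p y (k (th + d j) y)) m (x t) = 0"
    if ji: "j \<le> i" "i < ?l" and dp: "d (Suc i) $ p \<noteq> 0" and t: "\<tau> j < t" "t < \<tau> (Suc j)" for j p i t m
    using t
  proof (induction m arbitrary: t)
    case 0
    have "gtheta g N (x t) (k (th + d j) (x t)) (d (Suc i)) = 0"
      using constr[OF ji(2) ji(1), of t] 0 by auto
    then have "gtheta g N (x t) (k (th + d j) (x t)) (d (Suc i)) $ N p = 0" by simp
    then have "g p (x t) (k (th + d j) (x t)) * d (Suc i) $ p = 0" by (simp add: gtheta_comp[OF N_inj])
    then show ?case using dp by simp
  next
    case (Suc m)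
    have jl: "j < ?l" using ji by simp
    have dphi: "lie_deriv (Fj j) (\<lambda>y. g p y (k (th + d j) y)) m differentiable (at (x t))"
      unfolding Fj_def by (rule smo_diff[OF smo_lieh[OF f_smooth g_smooth k_smooth]])
    have "frechet_derivative (lie_deriv (Fj j) (\<lambda>y. g p y (k (th + d j) y)) m) (at (x t)) (Fj j (x t)) = 0"
      by (rule vanish_step[OF dphi der[OF jl Suc.prems], of "{\<tau> j<..<\<tau> (Suc j)}"])
        (use Suc in auto)
    then show ?case by simp
  qed
  have W: "\<not> star_prop f g N k th (th + d j) p"
    if ji: "j \<le> i" "i < ?l" and dp: "d (Suc i) $ p \<noteq> 0" for j p i
  proof
    assume sp: "star_prop f g N k th (th + d j) p"
    define t where "t = (\<tau> j + \<tau> (Suc j)) / 2"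
    have jl: "j < ?l" using ji by simp
    have tt: "\<tau> j < t" "t < \<tau> (Suc j)" using tau_mono[OF jl] unfolding t_def by auto
    have "t \<in> {0..T}" using tt tle[of 0 j] tle[of "Suc j" ?l] jl tau0 unfolding T_def by auto
    then have "x t \<noteq> 0" by (rule NZ)
    moreover have "x t = 0"
    proof -
      have "g p (x t) (k (th + d j) (x t)) = 0" using V[OF ji dp tt, of 0] by simp
      moreover have "\<forall>m\<ge>1. lie_deriv (Fz f g N k th (th + d j)) (\<lambda>y. g p y (k (th + d j) y)) m (x t) = 0"
        using V[OF ji dp tt] unfolding Fj_def by blast
      ultimately show ?thesis using sp unfolding star_prop_def by blast
    qed
    ultimately show False by contradiction
  qed
  define hat where "hat s = th + d (s - 1)" for s
  have Q: "\<forall>i. s \<le> i \<and> i \<le> ?l \<longrightarrow> (\<forall>r\<in>alg_union f g N k th hat s. d i $ r = 0)" if "s \<le> ?l" for s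
    using that
  proof (induction s)
    case 0 then show ?case by simp
  next
    case (Suc s)
    have IH: "\<forall>i. s \<le> i \<and> i \<le> ?l \<longrightarrow> (\<forall>r\<in>alg_union f g N k th hat s. d i $ r = 0)"
      using Suc by simp
    have zeq: "(\<chi> r. if r \<in> alg_union f g N k th hat s then th $ r else hat (Suc s) $ r) = th + d s"
      using IH Suc.prems unfolding hat_def by (auto simp: vec_eq_iff)
    show ?case
    proof (intro allI impI ballI)
      fix i r assume i: "Suc s \<le> i \<and> i \<le> ?l" and r: "r \<in> alg_union f g N k th hat (Suc s)"
      show "d i $ r = 0"
      proof (cases "r \<in> alg_union f g N k th hat s")
        case True then show ?thesis using IH i by auto
      next
        case False
        then have sp: "star_prop f g N k th (th + d s) r" using r zeq by simp
        obtain i' where i': "i = Suc i'" using i by (cases i) auto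
        show ?thesis
        proof (rule ccontr)
          assume "d i $ r \<noteq> 0"
          then show False using W[of s i' r] sp i i' by auto
        qed
      qed
    qed
  qed
  have "\<forall>r\<in>alg_union f g N k th hat ?l. d ?l $ r = 0" using Q[of ?l] by simp
  then have "d ?l = 0" using alg[of th hat] by (simp add: vec_eq_iff)
  then show False using d_nz[of ?l] by simp
qed

end
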